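(* Let $n\ge2$, $\alpha_2,\dots,\alpha_n\in\mathbb C$, and $T=I+\alpha_2D^2+\cdots+\alpha_nD^n\in\mathcal L(\mathcal P_n)$. Then for every $\varepsilon>0$ there exists $C_T(\varepsilon)>0$ such that for every $f\in\mathcal P_n$ of degree at least $2$ with simple roots, $$\tau(f)>C_T(\varepsilon)\ \Longrightarrow\ d_F\bigl(Z(f),Z(Tf)\bigr)<\varepsilon.$$
   Context: $\mathcal P_n$ is the complex vector space of polynomials of degree at most $n$, $D$ differentiation, $I$ identity. $Z(f)$ denotes the roots of $f$ counted with multiplicity (a multiset of size $\deg f$); $\deg Tf=\deg f$ for such $T$. For $f$ of degree $\ge2$ with at least two distinct roots, $\tau(f):=\min\{|w-v|:w\in Z(f),\ v\in Z(f')\setminus\{w\}\}$. For multisets $A=\{u_1,\dots,u_m\}$, $B=\{v_1,\dots,v_m\}$ in $\mathbb C$, $d_F(A,B)=\min_{\sigma}\max_{k}|u_k-v_{\sigma(k)}|$ over permutations $\sigma$ of $\{1,\dots,m\}$. *)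

theory Defs
  imports "HOL-Analysis.Analysis" "HOL-Computational_Algebra.Polynomial" "HOL-Combinatorics.Permutations"
begin

definition Top :: "nat \<Rightarrow> (nat \<Rightarrow> complex) \<Rightarrow> complex poly \<Rightarrow> complex poly" where
  "Top n \<alpha> f = f + (\<Sum>k=2..n. smult (\<alpha> k) ((pderiv ^^ k) f))"

text \<open>Z(f) is proots f (roots counted with multiplicity).
  tau(f) = min { |w - v| : w in Z(f), v in Z(f') - {w} }.\<close>
definition tau :: "complex poly \<Rightarrow> real" where
  "tau f = Min {cmod (w - v) | w v. w \<in># proots f \<and> v \<in># proots (pderiv f) \<and> v \<noteq> w}"

definition dF :: "complex multiset \<Rightarrow> complex multiset \<Rightarrow> real" where
  "dF A B = (let us = (SOME xs. mset xs = A); vs = (SOME ys. mset ys = B); m = size A in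
     Min ((\<lambda>\<sigma>. Max ((\<lambda>k. cmod (us ! k - vs ! (\<sigma> k))) ` {..<m})) ` {\<sigma>. \<sigma> permutes {..<m}}))"

end

theory Submission
  imports Defs "HOL-Computational_Algebra.Fundamental_Theorem_Algebra"
begin

lemma lin_pderiv: "pderiv [:-a,1:] = 1" by (simp add: pderiv_pCons)


lemma hpd_linear:
  "(pderiv^^Suc k) ([:-a,1:]*q) = [:-a,1:]*(pderiv^^Suc k) q + smult (of_nat (Suc k)) ((pderiv^^k) q)"
proof (induction k)
  case 0
  have "pderiv ([:-a,1:]*q) = [:-a,1:]*pderiv q + q * pderiv [:-a,1:]" by (rule pderiv_mult)
  then show ?case by (simp add: lin_pderiv)
next
  case (Suc k)
  have "(pderiv^^Suc (Suc k)) ([:-a,1:]*q) = pderiv ((pderiv^^Suc k) ([:-a,1:]*q))" by simp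
  also have "\<dots> = pderiv ([:-a,1:]*(pderiv^^Suc k) q) + smult (of_nat (Suc k)) ((pderiv^^Suc k) q)"
    unfolding Suc by (simp add: pderiv_add pderiv_smult)
  also have "pderiv ([:-a,1:]*(pderiv^^Suc k) q) = [:-a,1:]*pderiv ((pderiv^^Suc k) q) + (pderiv^^Suc k) q * pderiv [:-a,1:]" by (rule pderiv_mult)
  also have "[:-a,1:]*pderiv ((pderiv^^Suc k) q) + (pderiv^^Suc k) q * pderiv [:-a,1:] + smult (of_nat (Suc k)) ((pderiv^^Suc k) q)
     = [:-a,1:]*(pderiv^^Suc (Suc k)) q + smult (of_nat (Suc (Suc k))) ((pderiv^^Suc k) q)"
    by (simp only: lin_pderiv funpow.simps o_def mult_1_right of_nat_Suc smult_add_left smult_1_left) (simp add: algebra_simps)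
  finally show ?case .
qed

lemma bern_aux: "(m::real) \<ge> 0 \<Longrightarrow> m^(Suc k) + of_nat (Suc k) * m^k \<le> (m+1)^(Suc k)"
proof (induction k)
  case 0 then show ?case by simp
next
  case (Suc k)
  have "(m+1)^Suc (Suc k) = (m+1)*(m+1)^Suc k" by simp
  also have "\<dots> \<ge> (m+1)*(m^(Suc k) + of_nat (Suc k) * m^k)"
    using Suc by (intro mult_left_mono) auto
  finally have h: "(m+1)^Suc (Suc k) \<ge> (m+1)*(m^(Suc k) + of_nat (Suc k) * m^k)" .
  have "m^Suc(Suc k) + of_nat (Suc (Suc k)) * m^Suc k \<le> (m+1)*(m^(Suc k) + of_nat (Suc k) * m^k)"
    using Suc.prems by (simp add: algebra_simps)
  with h show ?case by linarith
qed

lemma has_root_complex: "degree (p::complex poly) > 0 \<Longrightarrow> \<exists>a. poly p a = 0"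
proof -
  assume "degree p > 0"
  then have "size (proots p) > 0" by (simp add: size_proots_complex)
  then obtain a where "a \<in># proots p" by (metis multiset_nonemptyE size_empty less_irrefl)
  moreover have "p \<noteq> 0" using \<open>degree p > 0\<close> by auto
  ultimately show ?thesis by auto
qed

lemma L1:
  fixes p :: "complex poly" and z :: complex and \<delta> :: real
  assumes "\<delta> > 0" "\<And>a. poly p a = 0 \<Longrightarrow> \<delta> \<le> cmod (z - a)"
  shows "cmod (poly ((pderiv^^k) p) z) * \<delta>^k \<le> (real (degree p))^k * cmod (poly p z)"
  using assms(2)
proof (induction "degree p" arbitrary: p k)
  case 0
  then obtain c where p: "p = [:c:]" by (metis degree_eq_zeroE)
  show ?case
  proof (cases k)
    case 0 then show ?thesis by simp
  next
    case (Suc j)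
    have "(pderiv^^Suc j) [:c:] = 0" by (induction j) (auto simp: pderiv_pCons)
    then show ?thesis using Suc p by simp
  qed
next
  case (Suc m p)
  obtain a where a: "poly p a = 0" using has_root_complex[of p] Suc.hyps(2) by auto
  then obtain q where pq: "p = [:-a,1:]*q" by (metis dvd_def poly_eq_0_iff_dvd)
  have "p \<noteq> 0" using Suc.hyps(2) by auto
  then have "q \<noteq> 0" using pq by auto
  have "degree ([:-a,1:]*q) = degree [:-a,1:] + degree q" by (rule degree_mult_eq) (use \<open>q\<noteq>0\<close> in auto)
  then have dq: "degree q = m" using Suc.hyps(2) pq by simp
  have qroots: "\<And>b. poly q b = 0 \<Longrightarrow> \<delta> \<le> cmod (z - b)" using Suc.prems pq by auto
  have IH: "\<And>j. cmod (poly ((pderiv^^j) q) z) * \<delta>^j \<le> (real m)^j * cmod (poly q z)"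
    using Suc.hyps(1)[of q] dq qroots by auto
  have za: "\<delta> \<le> cmod (z - a)" using Suc.prems a by auto
  have pz: "cmod (poly p z) = cmod (z - a) * cmod (poly q z)" using pq by (simp add: norm_mult[symmetric] left_diff_distrib)
  show ?case
  proof (cases k)
    case 0 then show ?thesis by simp
  next
    case (Suc j)
    have e: "poly ((pderiv^^Suc j) p) z = (z - a) * poly ((pderiv^^Suc j) q) z + of_nat (Suc j) * poly ((pderiv^^j) q) z"
      unfolding pq hpd_linear by (simp add: left_diff_distrib)
    have "cmod (poly ((pderiv^^Suc j) p) z) \<le> cmod (z - a) * cmod (poly ((pderiv^^Suc j) q) z) + of_nat (Suc j) * cmod (poly ((pderiv^^j) q) z)"
      unfolding e by (metis norm_mult norm_of_nat norm_triangle_ineq)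
    then have "cmod (poly ((pderiv^^Suc j) p) z) * \<delta>^Suc j \<le> (cmod (z - a) * cmod (poly ((pderiv^^Suc j) q) z) + of_nat (Suc j) * cmod (poly ((pderiv^^j) q) z)) * \<delta>^Suc j"
      by (rule mult_right_mono) (use \<open>\<delta>>0\<close> in simp)
    also have "\<dots> = cmod (z - a) * (cmod (poly ((pderiv^^Suc j) q) z) * \<delta>^Suc j) + of_nat (Suc j) * (cmod (poly ((pderiv^^j) q) z) * \<delta>^j) * \<delta>"
      by (simp only: power_Suc) (simp add: algebra_simps)
    also have "\<dots> \<le> cmod (z - a) * ((real m)^Suc j * cmod (poly q z)) + of_nat (Suc j) * ((real m)^j * cmod (poly q z)) * cmod (z - a)"
    proof -
      have i1: "cmod (z - a) * (cmod (poly ((pderiv^^Suc j) q) z) * \<delta>^Suc j) \<le> cmod (z - a) * ((real m)^Suc j * cmod (poly q z))"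
        by (rule mult_left_mono[OF IH]) simp
      have "cmod (poly ((pderiv^^j) q) z) * \<delta>^j * \<delta> \<le> ((real m)^j * cmod (poly q z)) * cmod (z - a)"
        by (rule mult_mono[OF IH za]) (use \<open>\<delta>>0\<close> in auto)
      then have i2: "of_nat (Suc j) * (cmod (poly ((pderiv^^j) q) z) * \<delta>^j) * \<delta> \<le> of_nat (Suc j) * ((real m)^j * cmod (poly q z)) * cmod (z - a)"
        by (simp add: mult.assoc mult_left_mono del: of_nat_Suc)
      from i1 i2 show ?thesis by linarith
    qed
    also have "\<dots> = ((real m)^Suc j + of_nat (Suc j) * (real m)^j) * cmod (poly p z)"
      unfolding pz by (simp add: algebra_simps)
    also have "\<dots> \<le> (real m + 1)^Suc j * cmod (poly p z)"
      by (intro mult_right_mono bern_aux) auto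
    finally show ?thesis using Suc \<open>Suc m = degree p\<close> by (metis of_nat_Suc add.commute)
  qed
qed

lemma L2:
  fixes p :: "complex poly" and z w :: complex and t r :: real
  assumes "t > 0" "r \<ge> 0" "\<And>a. poly p a = 0 \<Longrightarrow> t \<le> cmod (w - a)" "cmod (z - w) \<le> r"
  shows "cmod (poly p z - poly p w) \<le> real (degree p) * (r/t) * (1 + r/t)^(degree p) * cmod (poly p w)"
  using assms(3)
proof (induction "degree p" arbitrary: p)
  case 0
  then obtain c where p: "p = [:c:]" by (metis degree_eq_zeroE)
  then show ?case by simp
next
  case (Suc m p)
  define s where "s = r/t"
  have s0: "s \<ge> 0" using assms(1,2) by (simp add: s_def)
  obtain a where a: "poly p a = 0" using has_root_complex[of p] Suc.hyps(2) by auto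
  then obtain q where pq: "p = [:-a,1:]*q" by (metis dvd_def poly_eq_0_iff_dvd)
  have "p \<noteq> 0" using Suc.hyps(2) by auto
  then have "q \<noteq> 0" using pq by auto
  have "degree ([:-a,1:]*q) = degree [:-a,1:] + degree q" by (rule degree_mult_eq) (use \<open>q\<noteq>0\<close> in auto)
  then have dq: "degree q = m" using Suc.hyps(2) pq by simp
  have qroots: "\<And>b. poly q b = 0 \<Longrightarrow> t \<le> cmod (w - b)" using Suc.prems pq by auto
  define B where "B = real m * s * (1 + s)^m"
  have B0: "B \<ge> 0" using s0 by (simp add: B_def)
  have IH: "cmod (poly q z - poly q w) \<le> B * cmod (poly q w)"
    using Suc.hyps(1)[of q] dq qroots by (auto simp: B_def s_def)
  have wa: "t \<le> cmod (w - a)" using Suc.prems a by auto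
  have pw: "cmod (poly p w) = cmod (w - a) * cmod (poly q w)" using pq by (simp add: norm_mult[symmetric] left_diff_distrib)
  have K: "r * cmod (poly q w) \<le> s * cmod (poly p w)"
  proof -
    have "r * cmod (poly q w) * t \<le> r * cmod (poly q w) * cmod (w - a)"
      by (rule mult_left_mono[OF wa]) (use assms(2) in simp)
    also have "\<dots> = r * cmod (poly p w)" using pw by simp
    finally have "r * cmod (poly q w) * t \<le> r * cmod (poly p w)" .
    then show ?thesis using assms(1) by (simp add: s_def field_simps)
  qed
  have za: "cmod (z - a) \<le> cmod (w - a) + r"
    using norm_triangle_ineq[of "z - w" "w - a"] assms(4) by simp
  have e: "poly p z - poly p w = (z - a) * (poly q z - poly q w) + (z - w) * poly q w"
    unfolding pq by (simp add: algebra_simps)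
  have "cmod (poly p z - poly p w) \<le> cmod (z - a) * cmod (poly q z - poly q w) + cmod (z - w) * cmod (poly q w)"
    unfolding e by (metis norm_mult norm_triangle_ineq)
  also have "\<dots> \<le> (cmod (w - a) + r) * (B * cmod (poly q w)) + r * cmod (poly q w)"
    by (intro add_mono mult_mono za IH mult_right_mono assms(4)) (use B0 assms(2) in auto)
  also have "\<dots> = B * (cmod (poly p w) + r * cmod (poly q w)) + r * cmod (poly q w)"
    using pw by (simp add: algebra_simps)
  also have "\<dots> \<le> B * (cmod (poly p w) + s * cmod (poly p w)) + s * cmod (poly p w)"
    by (intro add_mono mult_left_mono K B0) auto
  also have "\<dots> = (real m * s * (1+s)^Suc m + s) * cmod (poly p w)"
    by (simp add: B_def algebra_simps)
  also have "\<dots> \<le> (real (Suc m) * s * (1+s)^Suc m) * cmod (poly p w)"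
  proof (rule mult_right_mono)
    have "1 \<le> (1+s)^Suc m" using s0 by (intro one_le_power) simp
    then have "s \<le> s * (1+s)^Suc m" using s0 by (simp add: mult_le_cancel_left1)
    then show "real m * s * (1+s)^Suc m + s \<le> real (Suc m) * s * (1+s)^Suc m"
      by (simp add: algebra_simps)
  qed simp
  finally show ?case using \<open>Suc m = degree p\<close> by (simp add: s_def)
qed

lemma HB:
  fixes P :: "complex poly"
  assumes "\<delta> > 0" "degree P \<le> n" "real n \<le> \<delta>" "\<And>a. poly P a = 0 \<Longrightarrow> \<delta> \<le> cmod (z - a)" "k \<ge> 1"
  shows "cmod (poly ((pderiv^^k) P) z) \<le> (real n/\<delta>) * cmod (poly P z)"
proof -
  have "cmod (poly ((pderiv^^k) P) z) * \<delta>^k \<le> (real (degree P))^k * cmod (poly P z)"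
    by (rule L1[OF assms(1) assms(4)])
  also have "\<dots> \<le> (real n)^k * cmod (poly P z)"
    by (intro mult_right_mono power_mono) (use assms(2) in auto)
  finally have h: "cmod (poly ((pderiv^^k) P) z) * \<delta>^k \<le> (real n)^k * cmod (poly P z)" .
  have "cmod (poly ((pderiv^^k) P) z) \<le> (real n)^k * cmod (poly P z) / \<delta>^k"
    using h assms(1) by (simp add: field_simps)
  also have "\<dots> = (real n/\<delta>)^k * cmod (poly P z)" by (simp add: power_divide)
  also have "\<dots> \<le> (real n/\<delta>) * cmod (poly P z)"
  proof (rule mult_right_mono)
    have r0: "0 \<le> real n/\<delta>" "real n/\<delta> \<le> 1" using assms(1,3) by auto
    obtain j where k: "k = Suc j" using assms(5) by (cases k) auto
    have "(real n/\<delta>)^j \<le> 1" using r0 by (simp add: power_le_one)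
    then have "(real n/\<delta>) * (real n/\<delta>)^j \<le> (real n/\<delta>) * 1" using r0
      by (intro mult_left_mono) auto
    then show "(real n/\<delta>)^k \<le> real n/\<delta>" unfolding k by (simp only: power_Suc mult_1_right)
  qed simp
  finally show ?thesis .
qed

lemma SB:
  fixes x :: "nat \<Rightarrow> complex"
  assumes "\<And>k. k \<in> S \<Longrightarrow> cmod (x k) \<le> X"
  shows "cmod (\<Sum>k\<in>S. \<alpha> k * x k) \<le> (\<Sum>k\<in>S. cmod (\<alpha> k)) * X"
proof -
  have "cmod (\<Sum>k\<in>S. \<alpha> k * x k) \<le> (\<Sum>k\<in>S. cmod (\<alpha> k) * cmod (x k))"
    by (metis (no_types, lifting) norm_mult norm_sum sum.cong)
  also have "\<dots> \<le> (\<Sum>k\<in>S. cmod (\<alpha> k) * X)"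
    by (intro sum_mono mult_left_mono assms) auto
  also have "\<dots> = (\<Sum>k\<in>S. cmod (\<alpha> k)) * X" by (simp add: sum_distrib_right)
  finally show ?thesis .
qed

lemma main:
  fixes f :: "complex poly" and \<alpha> :: "nat \<Rightarrow> complex" and n :: nat and r A :: real
  assumes d2: "2 \<le> degree f" and dn: "degree f \<le> n" and sqf: "rsquarefree f"
    and r0: "0 < r" and r1: "r \<le> 1" and Adef: "A = 1 + (\<Sum>k=2..n. cmod (\<alpha> k))"
    and tau: "tau f > 2*real n + 16*A*real n + 2*A*(real n)^2/r + 2 + 4*real n*2^n"
  shows "dF (proots f) (proots (Top n \<alpha> f)) < r"
proof -
  define \<tau> where "\<tau> = tau f"
  define \<delta> where "\<delta> = \<tau>/2"
  define \<rho> where "\<rho> = real n/\<delta>"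
  define g where "g = Top n \<alpha> f"
  define d where "d = degree f"
  have A1: "A \<ge> 1" unfolding Adef by (simp add: sum_nonneg)
  have t1: "\<tau> \<ge> 2*real n" "\<tau> \<ge> 16*A*real n" "\<tau> > 2*A*(real n)^2/r" "\<tau> \<ge> 2" "\<tau> \<ge> 4*real n*2^n"
  proof -
    have "0 \<le> 2*real n" "0 \<le> 16*A*real n" "0 \<le> 2*A*(real n)^2/r" "0 \<le> 4*real n*2^n"
      using A1 r0 by auto
    then show "\<tau> \<ge> 2*real n" "\<tau> \<ge> 16*A*real n" "\<tau> > 2*A*(real n)^2/r" "\<tau> \<ge> 2" "\<tau> \<ge> 4*real n*2^n"
      using tau unfolding \<tau>_def by linarith+
  qed
  have \<delta>0: "\<delta> > 0" "\<delta> \<ge> 1" using t1 by (auto simp: \<delta>_def)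
  have r\<delta>: "r \<le> \<delta>" using \<delta>0 r1 by simp
  have n\<delta>: "real n \<le> \<delta>" using t1 by (simp add: \<delta>_def)
  have \<rho>1: "0 \<le> \<rho>" "\<rho> \<le> 1" using n\<delta> \<delta>0 by (auto simp: \<rho>_def)
  have A\<rho>: "A * \<rho> \<le> 1/8"
  proof -
    have "A * \<rho> = 2*A*real n/\<tau>" by (simp add: \<rho>_def \<delta>_def)
    also have "\<dots> \<le> 1/8" using t1 \<delta>0 by (simp add: \<delta>_def field_simps)
    finally show ?thesis .
  qed
  have A\<rho>n: "A * \<rho> * real n / r < 1"
  proof -
    have "A * \<rho> * real n / r = (2*A*(real n)^2/r)/\<tau>" by (simp add: \<rho>_def \<delta>_def power2_eq_square field_simps)
    also have "\<dots> < 1" using t1(3) t1(4) by (subst divide_less_eq_1_pos) auto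
    finally show ?thesis .
  qed
  have f0: "f \<noteq> 0" using d2 by auto
  have f'0: "pderiv f \<noteq> 0" using d2 by (auto simp: degree_pderiv dest: arg_cong[of _ _ degree])
  have df': "degree (pderiv f) \<le> n" using dn by (simp add: degree_pderiv)
  have sqr: "\<And>a. poly f a = 0 \<Longrightarrow> poly (pderiv f) a \<noteq> 0" using sqf by (simp add: rsquarefree_roots)
  have tauF: "\<And>w v. poly f w = 0 \<Longrightarrow> poly (pderiv f) v = 0 \<Longrightarrow> \<tau> \<le> cmod (w - v)"
  proof -
    fix w v assume w: "poly f w = 0" and v: "poly (pderiv f) v = 0"
    let ?S = "{cmod (w - v) | w v. w \<in># proots f \<and> v \<in># proots (pderiv f) \<and> v \<noteq> w}"
    have "?S \<subseteq> (\<lambda>(w,v). cmod (w - v)) ` (set_mset (proots f) \<times> set_mset (proots (pderiv f)))"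
      by auto
    then have fin: "finite ?S" by (rule finite_subset) auto
    have "v \<noteq> w" using sqr w v by auto
    then have "cmod (w - v) \<in> ?S" using w v f0 f'0 by auto
    then show "\<tau> \<le> cmod (w - v)" unfolding \<tau>_def tau_def using fin by (rule Min_le[rotated])
  qed
  have polyg: "\<And>z. poly g z = poly f z + (\<Sum>k=2..n. \<alpha> k * poly ((pderiv^^k) f) z)"
    by (simp add: g_def Top_def poly_sum)
  have pderivg: "pderiv g = pderiv f + (\<Sum>k=2..n. smult (\<alpha> k) ((pderiv^^Suc k) f))"
    using higher_pderiv_sum[of 1 "\<lambda>k. smult (\<alpha> k) ((pderiv^^k) f)" "{2..n}"]
    by (simp add: g_def Top_def pderiv_add pderiv_smult)
  have polyg': "\<And>z. poly (pderiv g) z = poly (pderiv f) z + (\<Sum>k=2..n. \<alpha> k * poly ((pderiv^^Suc k) f) z)"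
    by (simp add: pderivg poly_sum)
  have degg: "degree g = d"
  proof -
    have "degree (\<Sum>k=2..n. smult (\<alpha> k) ((pderiv^^k) f)) \<le> d - 1"
    proof (rule degree_sum_le)
      fix k assume "k \<in> {2..n}"
      then have "degree ((pderiv^^k) f) \<le> d - 1" by (auto simp: degree_higher_pderiv d_def)
      then show "degree (smult (\<alpha> k) ((pderiv^^k) f)) \<le> d - 1"
        using degree_smult_le order_trans by blast
    qed simp
    also have "\<dots> < degree f" using d2 by (simp add: d_def)
    finally show ?thesis unfolding g_def Top_def d_def by (rule degree_add_eq_left)
  qed
  have g0: "g \<noteq> 0" using degg d2 by (auto simp: d_def)
  have partA: "\<And>u. poly g u = 0 \<Longrightarrow> \<exists>w. poly f w = 0 \<and> cmod (u - w) < r"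
  proof (rule ccontr)
    fix u assume gu: "poly g u = 0" and no: "\<not> (\<exists>w. poly f w = 0 \<and> cmod (u - w) < r)"
    then have fu: "poly f u \<noteq> 0" using r0 by force
    have far: "\<And>a. poly f a = 0 \<Longrightarrow> r \<le> cmod (u - a)" using no by force
    have Eu: "poly f u = - (\<Sum>k=2..n. \<alpha> k * poly ((pderiv^^k) f) u)"
      using gu polyg[of u] by (simp add: eq_neg_iff_add_eq_0)
    show False
    proof (cases "\<exists>v. poly (pderiv f) v = 0 \<and> cmod (u - v) < \<delta>")
      case True
      then obtain v where v: "poly (pderiv f) v = 0" "cmod (u - v) < \<delta>" by auto
      have ff: "\<And>a. poly f a = 0 \<Longrightarrow> \<delta> \<le> cmod (u - a)"
      proof -
        fix a assume "poly f a = 0"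
        then have "\<tau> \<le> cmod (a - v)" using tauF v by auto
        also have "\<dots> \<le> cmod (a - u) + cmod (u - v)" by (rule norm_diff_triangle_le) auto
        finally show "\<delta> \<le> cmod (u - a)" using v by (simp add: \<delta>_def norm_minus_commute)
      qed
      have "cmod (poly f u) = cmod (\<Sum>k=2..n. \<alpha> k * poly ((pderiv^^k) f) u)"
        using Eu by (metis norm_minus_cancel)
      also have "\<dots> \<le> (\<Sum>k=2..n. cmod (\<alpha> k)) * (\<rho> * cmod (poly f u))"
        by (rule SB) (use HB[OF \<delta>0(1) dn n\<delta> ff] in \<open>auto simp: \<rho>_def\<close>)
      also have "\<dots> \<le> A * (\<rho> * cmod (poly f u))"
        by (rule mult_right_mono) (use Adef \<rho>1 in auto)
      also have "\<dots> \<le> (1/8) * cmod (poly f u)" using mult_right_mono[OF A\<rho>, of "cmod (poly f u)"] by (simp add: mult.assoc)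
      finally show False using fu by simp
    next
      case False
      then have ff': "\<And>v. poly (pderiv f) v = 0 \<Longrightarrow> \<delta> \<le> cmod (u - v)" by force
      have hk: "\<And>k. k \<in> {2..n} \<Longrightarrow> cmod (poly ((pderiv^^k) f) u) \<le> \<rho> * cmod (poly (pderiv f) u)"
      proof -
        fix k assume k: "k \<in> {2..n}"
        then have "(pderiv^^k) f = (pderiv^^(k-1)) (pderiv f)"
          by (metis Suc_diff_1 funpow_Suc_right o_apply atLeastAtMost_iff less_le_trans pos2)
        then show "cmod (poly ((pderiv^^k) f) u) \<le> \<rho> * cmod (poly (pderiv f) u)"
          using HB[OF \<delta>0(1) df' n\<delta> ff', of "k-1"] k by (auto simp: \<rho>_def)
      qed
      have "cmod (poly f u) \<le> (\<Sum>k=2..n. cmod (\<alpha> k)) * (\<rho> * cmod (poly (pderiv f) u))"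
        unfolding Eu norm_minus_cancel by (rule SB) (rule hk)
      also have "\<dots> \<le> A * (\<rho> * cmod (poly (pderiv f) u))"
        by (rule mult_right_mono) (use Adef \<rho>1 in auto)
      finally have h1: "cmod (poly f u) \<le> A * \<rho> * cmod (poly (pderiv f) u)" by (simp add: mult.assoc)
      have "cmod (poly ((pderiv^^1) f) u) * r^1 \<le> (real (degree f))^1 * cmod (poly f u)"
        by (rule L1[OF r0 far])
      then have "cmod (poly (pderiv f) u) * r \<le> real n * cmod (poly f u)"
        using dn by (simp add: mult_right_mono order_trans)
      then have h2: "cmod (poly (pderiv f) u) \<le> real n / r * cmod (poly f u)"
        using r0 by (simp add: field_simps)
      have "cmod (poly f u) \<le> A * \<rho> * (real n / r * cmod (poly f u))"
        using h1 h2 A1 \<rho>1 by (meson mult_left_mono order_trans mult_nonneg_nonneg order_trans zero_le_one)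
      also have "\<dots> = (A * \<rho> * real n / r) * cmod (poly f u)" by simp
      also have "\<dots> < 1 * cmod (poly f u)" using A\<rho>n fu by (intro mult_strict_right_mono) auto
      finally show False by simp
    qed
  qed
  have \<tau>0: "\<tau> > 0" using t1 by simp
  have partB1: "\<And>w z. poly f w = 0 \<Longrightarrow> cmod (z - w) < r \<Longrightarrow>
      cmod (poly (pderiv g) z - poly (pderiv f) w) \<le> 1/2 * cmod (poly (pderiv f) w)"
  proof -
    fix w z assume w: "poly f w = 0" and zw: "cmod (z - w) < r"
    have fv: "\<And>v. poly (pderiv f) v = 0 \<Longrightarrow> \<delta> \<le> cmod (z - v)"
    proof -
      fix v assume v: "poly (pderiv f) v = 0"
      have "\<tau> \<le> cmod (w - v)" using tauF w v by auto
      also have "\<dots> \<le> cmod (w - z) + cmod (z - v)" by (rule norm_diff_triangle_le) auto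
      finally show "\<delta> \<le> cmod (z - v)" using zw r\<delta> by (simp add: \<delta>_def norm_minus_commute)
    qed
    have hk: "\<And>k. k \<in> {2..n} \<Longrightarrow> cmod (poly ((pderiv^^Suc k) f) z) \<le> \<rho> * cmod (poly (pderiv f) z)"
    proof -
      fix k assume k: "k \<in> {2..n}"
      have "(pderiv^^Suc k) f = (pderiv^^k) (pderiv f)" by (simp only: funpow_Suc_right o_apply)
      then show "cmod (poly ((pderiv^^Suc k) f) z) \<le> \<rho> * cmod (poly (pderiv f) z)"
        using HB[OF \<delta>0(1) df' n\<delta> fv, of k] k by (auto simp: \<rho>_def)
    qed
    have "cmod (\<Sum>k=2..n. \<alpha> k * poly ((pderiv^^Suc k) f) z) \<le> (\<Sum>k=2..n. cmod (\<alpha> k)) * (\<rho> * cmod (poly (pderiv f) z))"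
      by (rule SB) (rule hk)
    also have "\<dots> \<le> A * (\<rho> * cmod (poly (pderiv f) z))"
      by (rule mult_right_mono) (use Adef \<rho>1 in auto)
    finally have E1: "cmod (\<Sum>k=2..n. \<alpha> k * poly ((pderiv^^Suc k) f) z) \<le> A * \<rho> * cmod (poly (pderiv f) z)"
      by (simp add: mult.assoc)
    define s where "s = r/\<tau>"
    have s01: "0 \<le> s" "s \<le> 1" using r0 r1 t1 by (auto simp: s_def)
    have L: "cmod (poly (pderiv f) z - poly (pderiv f) w) \<le> real (degree (pderiv f)) * (r/\<tau>) * (1 + r/\<tau>)^(degree (pderiv f)) * cmod (poly (pderiv f) w)"
    proof (rule L2[OF \<tau>0])
      show "0 \<le> r" using r0 by simp
      show "cmod (z - w) \<le> r" using zw by simp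
      fix a assume "poly (pderiv f) a = 0"
      then show "\<tau> \<le> cmod (w - a)" by (rule tauF[OF w])
    qed
    have "real (degree (pderiv f)) * s * (1 + s)^(degree (pderiv f)) \<le> real n * s * 2^n"
    proof (intro mult_mono)
      have "(1+s)^(degree (pderiv f)) \<le> 2^(degree (pderiv f))" using s01 by (intro power_mono) auto
      also have "\<dots> \<le> 2^n" using df' by (intro power_increasing) auto
      finally show "(1+s)^(degree (pderiv f)) \<le> 2^n" .
    qed (use df' s01 in auto)
    also have "\<dots> \<le> 1/4"
    proof -
      have "real n * s * 2^n = (real n * 2^n * r) / \<tau>" by (simp add: s_def)
      also have "\<dots> \<le> (real n * 2^n * 1) / \<tau>" using r1 \<tau>0 by (intro divide_right_mono mult_left_mono) auto
      also have "\<dots> \<le> 1/4" using t1(5) \<tau>0 by (simp add: field_simps)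
      finally show ?thesis .
    qed
    finally have "real (degree (pderiv f)) * s * (1 + s)^(degree (pderiv f)) \<le> 1/4" .
    with L have L': "cmod (poly (pderiv f) z - poly (pderiv f) w) \<le> 1/4 * cmod (poly (pderiv f) w)"
      unfolding s_def by (meson mult_right_mono norm_ge_zero order_trans)
    have fz: "cmod (poly (pderiv f) z) \<le> 5/4 * cmod (poly (pderiv f) w)"
      using L' norm_triangle_ineq2[of "poly (pderiv f) z" "poly (pderiv f) w"] by linarith
    have "A * \<rho> * cmod (poly (pderiv f) z) \<le> (1/8) * (5/4 * cmod (poly (pderiv f) w))"
      using A\<rho> fz A1 \<rho>1 by (intro mult_mono) auto
    with E1 have E2: "cmod (\<Sum>k=2..n. \<alpha> k * poly ((pderiv^^Suc k) f) z) \<le> 5/32 * cmod (poly (pderiv f) w)"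
      by linarith
    have "poly (pderiv g) z - poly (pderiv f) w = (poly (pderiv f) z - poly (pderiv f) w) + (\<Sum>k=2..n. \<alpha> k * poly ((pderiv^^Suc k) f) z)"
      using polyg' by simp
    then have "cmod (poly (pderiv g) z - poly (pderiv f) w) \<le> cmod (poly (pderiv f) z - poly (pderiv f) w) + cmod (\<Sum>k=2..n. \<alpha> k * poly ((pderiv^^Suc k) f) z)"
      by (metis norm_triangle_ineq)
    then show "cmod (poly (pderiv g) z - poly (pderiv f) w) \<le> 1/2 * cmod (poly (pderiv f) w)"
      using L' E2 norm_ge_zero[of "poly (pderiv f) w"] by linarith
  qed
  have partB2: "\<And>w z1 z2. poly f w = 0 \<Longrightarrow> cmod (z1 - w) < r \<Longrightarrow> cmod (z2 - w) < r \<Longrightarrow>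
      poly g z1 = 0 \<Longrightarrow> poly g z2 = 0 \<Longrightarrow> z1 = z2"
  proof -
    fix w z1 z2 assume w: "poly f w = 0" and z1: "cmod (z1 - w) < r" and z2: "cmod (z2 - w) < r"
      and g1: "poly g z1 = 0" and g2: "poly g z2 = 0"
    define c where "c = poly (pderiv f) w"
    have c0: "c \<noteq> 0" using sqr w by (simp add: c_def)
    have inb: "\<And>z. z \<in> ball w r \<longleftrightarrow> cmod (z - w) < r" by (simp add: dist_norm norm_minus_commute)
    have b1: "z1 \<in> ball w r" using z1 inb by blast
    have b2: "z2 \<in> ball w r" using z2 inb by blast
    have "norm ((\<lambda>z. poly g z - c * z) z1 - (\<lambda>z. poly g z - c * z) z2) \<le> (1/2 * cmod c) * norm (z1 - z2)"
    proof (rule field_differentiable_bound[OF convex_ball _ _ b1 b2])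
      fix z assume zb: "z \<in> ball w r"
      show "((\<lambda>z. poly g z - c * z) has_field_derivative (poly (pderiv g) z - c)) (at z within ball w r)"
        using DERIV_diff[OF poly_DERIV[of g z] DERIV_cmult_Id[of c z]] by (rule has_field_derivative_at_within)
      have "cmod (z - w) < r" using zb inb by blast
      then show "norm (poly (pderiv g) z - c) \<le> 1/2 * cmod c"
        using partB1[OF w] unfolding c_def by blast
    qed
    then have "norm (c * (z1 - z2)) \<le> (1/2 * cmod c) * cmod (z1 - z2)"
      using g1 g2 by (simp add: right_diff_distrib norm_minus_commute)
    then have "cmod c * cmod (z1 - z2) \<le> (1/2 * cmod c) * cmod (z1 - z2)"
      by (simp add: norm_mult)
    then have "cmod c * cmod (z1 - z2) \<le> 0" by simp
    moreover have "cmod c > 0" using c0 by simp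
    ultimately have "cmod (z1 - z2) \<le> 0" by (simp add: mult_le_0_iff)
    then have "cmod (z1 - z2) = 0" by (meson norm_ge_zero order.antisym)
    then show "z1 = z2" by simp
  qed
  have partB3: "\<And>w z. poly f w = 0 \<Longrightarrow> cmod (z - w) < r \<Longrightarrow> poly g z = 0 \<Longrightarrow> count (proots g) z = 1"
  proof -
    fix w z assume w: "poly f w = 0" and zw: "cmod (z - w) < r" and gz: "poly g z = 0"
    have c0: "poly (pderiv f) w \<noteq> 0" using sqr w by simp
    have "poly (pderiv g) z \<noteq> 0"
    proof
      assume "poly (pderiv g) z = 0"
      then have "cmod (poly (pderiv f) w) \<le> 1/2 * cmod (poly (pderiv f) w)" using partB1[OF w zw] by simp
      then show False using c0 by simp
    qed
    then have "order z (pderiv g) = 0" using order_root by blast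
    then have "order z g = 1" using order_pderiv[OF g0 gz] by simp
    then show "count (proots g) z = 1" using g0 by simp
  qed
  define us where "us = (SOME xs. mset xs = proots f)"
  define vs where "vs = (SOME ys. mset ys = proots g)"
  have us: "mset us = proots f" unfolding us_def by (rule someI_ex) (rule ex_mset)
  have vs: "mset vs = proots g" unfolding vs_def by (rule someI_ex) (rule ex_mset)
  have lus: "length us = d" using us size_proots_complex[of f] by (metis size_mset d_def)
  have lvs: "length vs = d" using vs size_proots_complex[of g] degg by (metis size_mset)
  have szf: "size (proots f) = d" by (simp add: size_proots_complex d_def)
  have usr: "\<And>k. k < d \<Longrightarrow> poly f (us!k) = 0"
  proof -
    fix k assume "k < d"
    then have "us!k \<in># proots f" using lus us by (metis nth_mem set_mset_mset)
    then show "poly f (us!k) = 0" using f0 by simp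
  qed
  have vsr: "\<And>j. j < d \<Longrightarrow> poly g (vs!j) = 0"
  proof -
    fix j assume "j < d"
    then have "vs!j \<in># proots g" using lvs vs by (metis nth_mem set_mset_mset)
    then show "poly g (vs!j) = 0" using g0 by simp
  qed
  define \<phi> where "\<phi> j = (SOME k. k < d \<and> cmod (vs!j - us!k) < r)" for j
  have \<phi>: "\<And>j. j < d \<Longrightarrow> \<phi> j < d \<and> cmod (vs!j - us!\<phi> j) < r"
  proof -
    fix j assume j: "j < d"
    obtain w where w: "poly f w = 0" "cmod (vs!j - w) < r" using partA[OF vsr[OF j]] by auto
    then have "w \<in># proots f" using f0 by simp
    then have "w \<in> set us" using us by (metis set_mset_mset)
    then obtain k where "k < d" "us!k = w" using lus by (metis in_set_conv_nth)
    then have "\<exists>k. k < d \<and> cmod (vs!j - us!k) < r" using w by auto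
    then show "\<phi> j < d \<and> cmod (vs!j - us!\<phi> j) < r" unfolding \<phi>_def by (rule someI_ex)
  qed
  have inj: "inj_on \<phi> {..<d}"
  proof (rule inj_onI)
    fix j1 j2 assume j1: "j1 \<in> {..<d}" and j2: "j2 \<in> {..<d}" and eq: "\<phi> j1 = \<phi> j2"
    define k where "k = \<phi> j1"
    have k: "k < d" using \<phi> j1 by (auto simp: k_def)
    have c1: "cmod (vs!j1 - us!k) < r" using \<phi> j1 by (auto simp: k_def)
    have c2: "cmod (vs!j2 - us!k) < r" using \<phi> j2 eq by (auto simp: k_def)
    have same: "vs!j1 = vs!j2"
      by (rule partB2[OF usr[OF k] c1 c2 vsr vsr]) (use j1 j2 in auto)
    show "j1 = j2"
    proof (rule ccontr)
      assume ne: "j1 \<noteq> j2"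
      have "{j1, j2} \<subseteq> {i. i < length vs \<and> vs!j1 = vs!i}" using j1 j2 same lvs by auto
      then have "card {j1, j2} \<le> card {i. i < length vs \<and> vs!j1 = vs!i}"
        by (rule card_mono[rotated]) auto
      also have "\<dots> = count (mset vs) (vs!j1)"
        by (simp add: count_mset count_list_eq_length_filter length_filter_conv_card)
      also have "\<dots> = 1" using partB3[OF usr[OF k] c1 vsr] j1 vs by auto
      finally show False using ne by simp
    qed
  qed
  have img: "\<phi> ` {..<d} = {..<d}"
  proof (rule card_subset_eq)
    show "\<phi> ` {..<d} \<subseteq> {..<d}" using \<phi> by auto
    show "card (\<phi> ` {..<d}) = card {..<d}" using inj by (rule card_image)
  qed simp
  have bij: "bij_betw \<phi> {..<d} {..<d}" using inj img by (simp add: bij_betw_def)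
  define \<sigma> where "\<sigma> k = (if k < d then inv_into {..<d} \<phi> k else k)" for k
  have bs: "bij_betw \<sigma> {..<d} {..<d}"
    using bij_betw_inv_into[OF bij] by (rule bij_betw_cong[THEN iffD1, rotated]) (simp add: \<sigma>_def)
  have perm: "\<sigma> permutes {..<d}" by (rule bij_imp_permutes[OF bs]) (simp add: \<sigma>_def)
  have close: "\<And>k. k < d \<Longrightarrow> cmod (us!k - vs!(\<sigma> k)) < r"
  proof -
    fix k assume k: "k < d"
    have sk: "\<sigma> k < d" "\<phi> (\<sigma> k) = k" using k img bs
      by (auto simp: \<sigma>_def f_inv_into_f bij_betw_def)
    then show "cmod (us!k - vs!(\<sigma> k)) < r" using \<phi>[OF sk(1)] by (simp add: norm_minus_commute)
  qed
  let ?F = "\<lambda>\<sigma>. Max ((\<lambda>k. cmod (us ! k - vs ! (\<sigma> k))) ` {..<d})"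
  have "dF (proots f) (proots g) = Min (?F ` {\<sigma>. \<sigma> permutes {..<d}})"
    unfolding dF_def Let_def us_def[symmetric] vs_def[symmetric] szf ..
  also have "\<dots> \<le> ?F \<sigma>"
    by (rule Min_le) (use perm finite_permutations[of "{..<d}"] in auto)
  also have "\<dots> < r"
    using close d2 by (subst Max_less_iff) (auto simp: d_def lessThan_empty_iff)
  finally show ?thesis unfolding g_def .
qed

theorem theorem4p2:
  fixes n :: nat and \<alpha> :: "nat \<Rightarrow> complex"
  assumes "n \<ge> 2"
  shows "\<forall>\<epsilon>>0. \<exists>C>0. \<forall>f :: complex poly.
           degree f \<le> n \<and> degree f \<ge> 2 \<and> rsquarefree f \<longrightarrow>
           tau f > C \<longrightarrow> dF (proots f) (proots (Top n \<alpha> f)) < \<epsilon>"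
proof (intro allI impI)
  fix \<epsilon> :: real assume e: "\<epsilon> > 0"
  define A where "A = 1 + (\<Sum>k=2..n. cmod (\<alpha> k))"
  define r where "r = min \<epsilon> 1"
  define C where "C = 2*real n + 16*A*real n + 2*A*(real n)^2/r + 2 + 4*real n*2^n"
  have A1: "A \<ge> 1" unfolding A_def by (simp add: sum_nonneg)
  have r0: "r > 0" "r \<le> 1" "r \<le> \<epsilon>" using e by (auto simp: r_def)
  have "C > 0"
  proof -
    have "0 \<le> 2*real n" "0 \<le> 16*A*real n" "0 \<le> 2*A*(real n)^2/r" "0 \<le> 4*real n*2^n"
      using A1 r0 by auto
    then show ?thesis unfolding C_def by linarith
  qed
  moreover have "\<forall>f :: complex poly. degree f \<le> n \<and> degree f \<ge> 2 \<and> rsquarefree f \<longrightarrow>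
           tau f > C \<longrightarrow> dF (proots f) (proots (Top n \<alpha> f)) < \<epsilon>"
  proof (intro allI impI)
    fix f :: "complex poly"
    assume h: "degree f \<le> n \<and> degree f \<ge> 2 \<and> rsquarefree f" and t: "tau f > C"
    have "dF (proots f) (proots (Top n \<alpha> f)) < r"
      using h t by (intro main[OF _ _ _ r0(1) r0(2) A_def]) (auto simp: C_def)
    then show "dF (proots f) (proots (Top n \<alpha> f)) < \<epsilon>" using r0 by simp
  qed
  ultimately show "\<exists>C>0. \<forall>f :: complex poly. degree f \<le> n \<and> degree f \<ge> 2 \<and> rsquarefree f \<longrightarrow>
           tau f > C \<longrightarrow> dF (proots f) (proots (Top n \<alpha> f)) < \<epsilon>" by blast
qed

end
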